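(* Let $p_{UV}$ be a joint distribution of a random vector $U\in\mathbb{F}^{2n}$ and a discrete random variable $V$, and let $J$ be the associated rank variable. For $k\in\{0,\dots,n\}$, $r=k/n$, $m=n-k$, define $\epsilon^{conv}(p_{UV},r)=\Pr[J>2^m]$ and $\epsilon^{ach}(p_{UV},r)=\Pr[J>2^m]+\mathbb{E}\big[\mathbf{1}\{J\le 2^m\}(J-1)2^{-m}\big]$. Then $$\epsilon^{conv}(p_{UV},r)\le\epsilon_{guess}(p_{UV},r)\le\epsilon^{ach}(p_{UV},r).$$ Moreover, with $R^{ach}(p_{UV},\epsilon)=\max\{r:\epsilon^{ach}(p_{UV},r)\le\epsilon\}$ and $R^{conv}(p_{UV},\epsilon)=\min\{r:\epsilon^{conv}(p_{UV},r)>\epsilon\}$ (with $r$ ranging over $\{k/n:k=0,\dots,n\}$), $$R^{ach}(p_{UV},\epsilon)\le R_{guess}(p_{UV},\epsilon)<R^{conv}(p_{UV},\epsilon).$$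
   Context: $\mathbb{F}$ is the field with two elements, $e_{N,i}$ the $i$-th standard basis vector of $\mathbb{F}^N$, $R_{2n}=\sum_{i=1}^{2n}e_{2n,i}e_{2n,2n+1-i}^{\top}$, $\mathrm{Sp}_{2n}=\{C\in\mathbb{F}^{2n\times2n}:C^{\top}R_{2n}C=R_{2n}\}$. Given $p_{UV}$, a partition $n=m+k$, a matrix $C\in\mathrm{Sp}_{2n}$ and a decoder $D$ (a map from pairs (side information value, syndrome in $\mathbb{F}^m$) to $\mathbb{F}^{2n}$), the probability of incorrect guess is $\Pr\big[D\big(V,\sum_{i=1}^m e_{m,i}e_{2n,i}^{\top}CU\big)\ne U\big]$ (the syndrome is the first $m$ coordinates of $CU$). For $r=k/n$, $\epsilon_{guess}(p_{UV},r)$ is the lowest probability of incorrect guess over all pairs $(C,D)$ using $m=n-k$ syndrome bits; for $\epsilon>0$, $R_{guess}(p_{UV},\epsilon)$ is the maximum value of $k/n$ such that some pair $(C,D)$ with $m=n-k$ has probability of incorrect guess at most $\epsilon$. Rank variable: for each value $v$ of $V$, list the $2^{2n}$ vectors of $\mathbb{F}^{2n}$ as $\sigma(1,v),\dots,\sigma(2^{2n},v)$ with $p_{UV}(\sigma(1,v),v)\ge p_{UV}(\sigma(2,v),v)\ge\cdots$ (ties broken arbitrarily), and let $J\in[2^{2n}]$ be the random variable such that the event $\{J=j,V=v\}$ equals $\{U=\sigma(j,v),V=v\}$. $\mathbf{1}\{\cdot\}$ is the indicator. *)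

theory Defs
  imports "HOL-Probability.Probability" "HOL-Library.Z2"
begin

text \<open>Vectors of F^N (F = GF(2) = type bit) are functions nat => bit, with coordinates
  indexed 0..N-1 (0-based) and zero outside. Matrices are nat => nat => bit.\<close>

definition vecs :: "nat \<Rightarrow> (nat \<Rightarrow> bit) set" where
  "vecs N = {u. \<forall>i\<ge>N. u i = 0}"

definition mat_vec :: "nat \<Rightarrow> (nat \<Rightarrow> nat \<Rightarrow> bit) \<Rightarrow> (nat \<Rightarrow> bit) \<Rightarrow> (nat \<Rightarrow> bit)" where
  "mat_vec N C u = (\<lambda>i. if i < N then (\<Sum>j<N. C i j * u j) else 0)"

definition Rmat :: "nat \<Rightarrow> nat \<Rightarrow> nat \<Rightarrow> bit" where
  "Rmat n i j = (if i < 2*n \<and> j < 2*n \<and> i + j = 2*n - 1 then 1 else 0)"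

definition Sp :: "nat \<Rightarrow> (nat \<Rightarrow> nat \<Rightarrow> bit) set" where
  "Sp n = {C. (\<forall>i j. (2*n \<le> i \<or> 2*n \<le> j) \<longrightarrow> C i j = 0) \<and>
     (\<forall>i<2*n. \<forall>j<2*n. (\<Sum>a<2*n. \<Sum>b<2*n. C a i * Rmat n a b * C b j) = Rmat n i j)}"

definition syndrome :: "nat \<Rightarrow> nat \<Rightarrow> (nat \<Rightarrow> nat \<Rightarrow> bit) \<Rightarrow> (nat \<Rightarrow> bit) \<Rightarrow> (nat \<Rightarrow> bit)" where
  "syndrome n m C u = (\<lambda>i. if i < m then mat_vec (2*n) C u i else 0)"

definition err_prob :: "((nat \<Rightarrow> bit) \<times> 'v) pmf \<Rightarrow> nat \<Rightarrow> nat \<Rightarrow> (nat \<Rightarrow> nat \<Rightarrow> bit)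
    \<Rightarrow> ('v \<Rightarrow> (nat \<Rightarrow> bit) \<Rightarrow> (nat \<Rightarrow> bit)) \<Rightarrow> real" where
  "err_prob p n m C D = measure_pmf.prob p {(u, v). D v (syndrome n m C u) \<noteq> u}"

definition eps_guess :: "((nat \<Rightarrow> bit) \<times> 'v) pmf \<Rightarrow> nat \<Rightarrow> nat \<Rightarrow> real" where
  "eps_guess p n k = Inf {err_prob p n (n - k) C D | C D. C \<in> Sp n}"

text \<open>R_guess(p, eps): maximum of k/n over achievable k (max of the empty set = -infinity).\<close>
definition R_guess :: "((nat \<Rightarrow> bit) \<times> 'v) pmf \<Rightarrow> nat \<Rightarrow> real \<Rightarrow> ereal" where
  "R_guess p n \<epsilon> = Sup {ereal (real k / real n) | k. k \<le> n \<and>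
      (\<exists>C D. C \<in> Sp n \<and> err_prob p n (n - k) C D \<le> \<epsilon>)}"

definition is_ranking :: "((nat \<Rightarrow> bit) \<times> 'v) pmf \<Rightarrow> nat \<Rightarrow> ('v \<Rightarrow> nat \<Rightarrow> (nat \<Rightarrow> bit)) \<Rightarrow> bool" where
  "is_ranking p n \<sigma> \<longleftrightarrow> (\<forall>v. bij_betw (\<sigma> v) {1..2^(2*n)} (vecs (2*n)) \<and>
      (\<forall>j1 j2. 1 \<le> j1 \<and> j1 \<le> j2 \<and> j2 \<le> 2^(2*n) \<longrightarrow> pmf p (\<sigma> v j2, v) \<le> pmf p (\<sigma> v j1, v)))"

definition rank :: "nat \<Rightarrow> ('v \<Rightarrow> nat \<Rightarrow> (nat \<Rightarrow> bit)) \<Rightarrow> (nat \<Rightarrow> bit) \<times> 'v \<Rightarrow> nat" where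
  "rank n \<sigma> uv = (THE j. j \<in> {1..2^(2*n)} \<and> \<sigma> (snd uv) j = fst uv)"

definition eps_conv :: "((nat \<Rightarrow> bit) \<times> 'v) pmf \<Rightarrow> nat \<Rightarrow> ('v \<Rightarrow> nat \<Rightarrow> (nat \<Rightarrow> bit)) \<Rightarrow> nat \<Rightarrow> real" where
  "eps_conv p n \<sigma> k = measure_pmf.prob p {uv. rank n \<sigma> uv > 2^(n - k)}"

definition eps_ach :: "((nat \<Rightarrow> bit) \<times> 'v) pmf \<Rightarrow> nat \<Rightarrow> ('v \<Rightarrow> nat \<Rightarrow> (nat \<Rightarrow> bit)) \<Rightarrow> nat \<Rightarrow> real" where
  "eps_ach p n \<sigma> k = measure_pmf.prob p {uv. rank n \<sigma> uv > 2^(n - k)} +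
     measure_pmf.expectation p (\<lambda>uv. (if rank n \<sigma> uv \<le> 2^(n - k) then 1 else 0) *
        (real (rank n \<sigma> uv) - 1) / 2^(n - k))"

text \<open>R^ach = max {r : eps_ach \<le> eps} (max of empty = -infinity),
  R^conv = min {r : eps_conv > eps} (min of empty = +infinity); r ranges over {k/n : k \<le> n}.\<close>
definition R_ach :: "((nat \<Rightarrow> bit) \<times> 'v) pmf \<Rightarrow> nat \<Rightarrow> ('v \<Rightarrow> nat \<Rightarrow> (nat \<Rightarrow> bit)) \<Rightarrow> real \<Rightarrow> ereal" where
  "R_ach p n \<sigma> \<epsilon> = Sup {ereal (real k / real n) | k. k \<le> n \<and> eps_ach p n \<sigma> k \<le> \<epsilon>}"

definition R_conv :: "((nat \<Rightarrow> bit) \<times> 'v) pmf \<Rightarrow> nat \<Rightarrow> ('v \<Rightarrow> nat \<Rightarrow> (nat \<Rightarrow> bit)) \<Rightarrow> real \<Rightarrow> ereal" where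
  "R_conv p n \<sigma> \<epsilon> = Inf {ereal (real k / real n) | k. k \<le> n \<and> eps_conv p n \<sigma> k > \<epsilon>}"

end

theory Submission
  imports Defs
begin

declare add_bit_eq_xor[simp del] mult_bit_eq_and[simp del]

lemma bit_add_self[simp]: "(a::bit) + a = 0" by (cases a) auto
lemma bit_eq_iff_add: "((a::bit) = b) = (a + b = 0)"
  by (cases a; cases b) auto

definition om :: "nat \<Rightarrow> (nat \<Rightarrow> bit) \<Rightarrow> (nat \<Rightarrow> bit) \<Rightarrow> bit" where
  "om N x y = (\<Sum>a<N. x a * y (N - 1 - a))"

definition evec :: "nat \<Rightarrow> nat \<Rightarrow> bit" where
  "evec k = (\<lambda>i. if i = k then 1 else 0)"

definition mm :: "nat \<Rightarrow> (nat \<Rightarrow> nat \<Rightarrow> bit) \<Rightarrow> (nat \<Rightarrow> nat \<Rightarrow> bit) \<Rightarrow> (nat \<Rightarrow> nat \<Rightarrow> bit)" where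
  "mm N A B = (\<lambda>i j. if i < N \<and> j < N then (\<Sum>l<N. A i l * B l j) else 0)"

definition zo :: "nat \<Rightarrow> (nat \<Rightarrow> nat \<Rightarrow> bit) \<Rightarrow> bool" where
  "zo N C = (\<forall>i j. (N \<le> i \<or> N \<le> j) \<longrightarrow> C i j = 0)"

definition G :: "nat \<Rightarrow> (nat \<Rightarrow> nat \<Rightarrow> bit) \<Rightarrow> nat \<Rightarrow> nat \<Rightarrow> bit" where
  "G N C i j = (\<Sum>a<N. C a i * C (N - 1 - a) j)"

lemma mat_vec_vecs: "mat_vec N C u \<in> vecs N"
  by (simp add: mat_vec_def vecs_def)

lemma mat_vec_add: "mat_vec N C (\<lambda>i. x i + y i) = (\<lambda>i. mat_vec N C x i + mat_vec N C y i)"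
  by (auto simp: mat_vec_def fun_eq_iff distrib_left sum.distrib)

lemma mat_vec_mm: "mat_vec N (mm N A B) x = mat_vec N A (mat_vec N B x)"
proof -
  have "(\<Sum>j<N. (\<Sum>l<N. A i l * B l j) * x j) = (\<Sum>l<N. A i l * (\<Sum>j<N. B l j * x j))" for i
  proof -
    have "(\<Sum>j<N. (\<Sum>l<N. A i l * B l j) * x j) = (\<Sum>j<N. \<Sum>l<N. A i l * (B l j * x j))"
      by (simp add: sum_distrib_right mult.assoc)
    also have "\<dots> = (\<Sum>l<N. \<Sum>j<N. A i l * (B l j * x j))" by (rule sum.swap)
    also have "\<dots> = (\<Sum>l<N. A i l * (\<Sum>j<N. B l j * x j))" by (simp add: sum_distrib_left)
    finally show ?thesis .
  qed
  then show ?thesis by (auto simp: mat_vec_def mm_def fun_eq_iff)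
qed

lemma sum_anti: "(a::nat) < N \<Longrightarrow> (\<Sum>b<N. if a + b = N - 1 then f b else 0) = (f (N - 1 - a) :: bit)"
proof -
  assume a: "a < N"
  have "(\<Sum>b<N. if a + b = N - 1 then f b else 0) = (\<Sum>b<N. if b = N - 1 - a then f b else 0)"
  proof (rule sum.cong[OF refl])
    fix b have "a + b = N - 1 \<longleftrightarrow> b = N - 1 - a" using a by arith
    then show "(if a + b = N - 1 then f b else 0) = (if b = N - 1 - a then f b else 0)" by simp
  qed
  also have "\<dots> = f (N - 1 - a)" using a by (simp add: sum.delta)
  finally show ?thesis .
qed

lemma Rsum: "(\<Sum>a<2*n. \<Sum>b<2*n. C a i * Rmat n a b * C b j) = G (2*n) C i j"
proof -
  have "(\<Sum>b<2*n. C a i * Rmat n a b * C b j) = C a i * C (2*n - 1 - a) j" if "a < 2*n" for a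
  proof -
    have "(\<Sum>b<2*n. C a i * Rmat n a b * C b j) = (\<Sum>b<2*n. if a + b = 2*n - 1 then C a i * C b j else 0)"
      by (rule sum.cong) (use that in \<open>auto simp: Rmat_def\<close>)
    also have "\<dots> = C a i * C (2*n - 1 - a) j" using that by (rule sum_anti)
    finally show ?thesis .
  qed
  then show ?thesis by (simp add: G_def)
qed

lemma om_expand:
  assumes "x \<in> vecs N" "y \<in> vecs N"
  shows "om N (mat_vec N C x) (mat_vec N C y) = (\<Sum>i<N. \<Sum>j<N. x i * y j * G N C i j)"
proof -
  have "om N (mat_vec N C x) (mat_vec N C y) = (\<Sum>a<N. (\<Sum>i<N. C a i * x i) * (\<Sum>j<N. C (N - 1 - a) j * y j))"
    unfolding om_def mat_vec_def by (rule sum.cong) auto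
  also have "\<dots> = (\<Sum>a<N. \<Sum>i<N. \<Sum>j<N. x i * y j * (C a i * C (N - 1 - a) j))"
    by (simp add: sum_product mult_ac)
  also have "\<dots> = (\<Sum>i<N. \<Sum>a<N. \<Sum>j<N. x i * y j * (C a i * C (N - 1 - a) j))"
    by (rule sum.swap)
  also have "\<dots> = (\<Sum>i<N. \<Sum>j<N. \<Sum>a<N. x i * y j * (C a i * C (N - 1 - a) j))"
    by (rule sum.cong[OF refl], rule sum.swap)
  also have "\<dots> = (\<Sum>i<N. \<Sum>j<N. x i * y j * G N C i j)"
    by (simp add: G_def sum_distrib_left)
  finally show ?thesis .
qed

lemma om_R:
  assumes "x \<in> vecs (2*n)" "y \<in> vecs (2*n)"
  shows "om (2*n) x y = (\<Sum>i<2*n. \<Sum>j<2*n. x i * y j * Rmat n i j)"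
proof -
  have "(\<Sum>j<2*n. x i * y j * Rmat n i j) = x i * y (2*n - 1 - i)" if "i < 2*n" for i
  proof -
    have "(\<Sum>j<2*n. x i * y j * Rmat n i j) = (\<Sum>j<2*n. if i + j = 2*n - 1 then x i * y j else 0)"
      by (rule sum.cong) (use that in \<open>auto simp: Rmat_def\<close>)
    also have "\<dots> = x i * y (2*n - 1 - i)" using that by (rule sum_anti)
    finally show ?thesis .
  qed
  then show ?thesis by (simp add: om_def)
qed

lemma mat_vec_evec: "j < N \<Longrightarrow> mat_vec N C (evec j) = (\<lambda>r. if r < N then C r j else 0)"
  by (auto simp: mat_vec_def evec_def fun_eq_iff if_distrib cong: if_cong)

lemma evec_vecs: "j < N \<Longrightarrow> evec j \<in> vecs N"
  by (auto simp: vecs_def evec_def)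

lemma sum_evec: "i < N \<Longrightarrow> (\<Sum>i'<N. evec i i' * f i') = (f i :: bit)"
proof -
  assume "i < N"
  have "(\<Sum>i'<N. evec i i' * f i') = (\<Sum>i'<N. if i' = i then f i' else 0)" by (rule sum.cong) (auto simp: evec_def)
  then show ?thesis using \<open>i < N\<close> by (simp add: sum.delta)
qed

lemma sum_evec2: "i < N \<Longrightarrow> j < N \<Longrightarrow> (\<Sum>i'<N. \<Sum>j'<N. evec i i' * evec j j' * f i' j') = (f i j :: bit)"
proof -
  assume "i < N" "j < N"
  have "(\<Sum>i'<N. \<Sum>j'<N. evec i i' * evec j j' * f i' j') = (\<Sum>i'<N. evec i i' * (\<Sum>j'<N. evec j j' * f i' j'))"
    by (simp add: sum_distrib_left mult.assoc)
  also have "\<dots> = (\<Sum>i'<N. evec i i' * f i' j)" using \<open>j < N\<close> by (simp add: sum_evec)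
  also have "\<dots> = f i j" using \<open>i < N\<close> by (simp add: sum_evec)
  finally show ?thesis .
qed

lemma Sp_iff: "C \<in> Sp n \<longleftrightarrow> zo (2*n) C \<and>
   (\<forall>x\<in>vecs (2*n). \<forall>y\<in>vecs (2*n). om (2*n) (mat_vec (2*n) C x) (mat_vec (2*n) C y) = om (2*n) x y)"
proof
  assume C: "C \<in> Sp n"
  then have zo: "zo (2*n) C" and GR: "\<And>i j. i < 2*n \<Longrightarrow> j < 2*n \<Longrightarrow> G (2*n) C i j = Rmat n i j"
    by (auto simp: Sp_def zo_def Rsum)
  show "zo (2*n) C \<and> (\<forall>x\<in>vecs (2*n). \<forall>y\<in>vecs (2*n). om (2*n) (mat_vec (2*n) C x) (mat_vec (2*n) C y) = om (2*n) x y)"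
    using zo GR by (simp add: om_expand om_R)
next
  assume H: "zo (2*n) C \<and> (\<forall>x\<in>vecs (2*n). \<forall>y\<in>vecs (2*n). om (2*n) (mat_vec (2*n) C x) (mat_vec (2*n) C y) = om (2*n) x y)"
  have "G (2*n) C i j = Rmat n i j" if "i < 2*n" "j < 2*n" for i j
  proof -
    have "om (2*n) (mat_vec (2*n) C (evec i)) (mat_vec (2*n) C (evec j)) = om (2*n) (evec i) (evec j)"
      using H evec_vecs that by blast
    moreover have "om (2*n) (mat_vec (2*n) C (evec i)) (mat_vec (2*n) C (evec j)) = G (2*n) C i j"
      using that by (simp add: om_expand evec_vecs sum_evec2)
    moreover have "om (2*n) (evec i) (evec j) = Rmat n i j"
      using that by (simp add: om_R evec_vecs sum_evec2)
    ultimately show ?thesis by simp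
  qed
  then show "C \<in> Sp n" using H by (auto simp: Sp_def zo_def Rsum)
qed


lemma om_sym: "om N x y = om N y x"
proof -
  have "om N y x = (\<Sum>i<N. y (N - Suc i) * x (N - 1 - (N - Suc i)))"
    unfolding om_def by (rule sum.nat_diff_reindex[symmetric])
  also have "\<dots> = om N x y" unfolding om_def
    by (rule sum.cong) (auto simp: mult.commute)
  finally show ?thesis by simp
qed

lemma om_alt: "om (2*n) v v = 0"
proof -
  define g where "g a = v a * v (2*n - 1 - a)" for a
  have "om (2*n) v v = sum g {0..<n} + sum g {n..<2*n}"
    unfolding om_def g_def by (subst sum.atLeastLessThan_concat) (auto simp: atLeast0LessThan)
  also have "sum g {n..<2*n} = sum (\<lambda>i. g (2*n - 1 - i)) {0..<n}"
    by (rule sum.reindex_bij_witness[where i="\<lambda>a. 2*n - 1 - a" and j="\<lambda>a. 2*n - 1 - a"]) auto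
  also have "\<dots> = sum g {0..<n}"
    by (rule sum.cong) (auto simp: g_def mult.commute)
  finally show ?thesis by simp
qed

lemma om_add2: "om N x (\<lambda>r. a r + b r) = om N x a + om N x b"
  by (simp add: om_def distrib_left sum.distrib)

lemma om_zero1: "om N (\<lambda>_. 0) y = 0"
  by (simp add: om_def)

lemma om_evec: "k < N \<Longrightarrow> om N x (evec (N - Suc k)) = x k"
proof -
  assume k: "k < N"
  have "om N x (evec (N - Suc k)) = (\<Sum>a<N. if a = k then x a else 0)"
    unfolding om_def by (rule sum.cong) (use k in \<open>auto simp: evec_def\<close>)
  then show ?thesis using k by (simp add: sum.delta)
qed

lemma om_lin: "om N (\<lambda>i. x i + c * v i) (\<lambda>i. y i + d * v i) =
   om N x y + d * om N x v + c * om N v y + c * d * om N v v"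
  by (simp add: om_def algebra_simps sum.distrib sum_distrib_left)

lemma bit_cancel: "(a::bit) + b * c + c * b = a" by (cases b; cases c) auto

definition trv :: "nat \<Rightarrow> (nat \<Rightarrow> bit) \<Rightarrow> (nat \<Rightarrow> nat \<Rightarrow> bit)" where
  "trv N v = (\<lambda>i j. if i < N \<and> j < N then (if i = j then 1 else 0) + v i * v (N - 1 - j) else 0)"

lemma mat_vec_trv:
  assumes "x \<in> vecs N" "v \<in> vecs N"
  shows "mat_vec N (trv N v) x = (\<lambda>i. x i + om N x v * v i)"
proof
  fix i
  show "mat_vec N (trv N v) x i = x i + om N x v * v i"
  proof (cases "i < N")
    case True
    have "mat_vec N (trv N v) x i = (\<Sum>j<N. (if j = i then x j else 0) + v i * (x j * v (N - 1 - j)))"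
      unfolding mat_vec_def trv_def using True by (auto intro!: sum.cong simp: algebra_simps)
    also have "\<dots> = x i + om N x v * v i"
      using True by (simp add: sum.distrib sum.delta om_def sum_distrib_left mult.commute)
    finally show ?thesis .
  next
    case False then show ?thesis using assms by (simp add: mat_vec_def vecs_def)
  qed
qed

lemma zo_trv: "zo N (trv N v)" by (simp add: zo_def trv_def)
lemma zo_mm: "zo N (mm N A B)" by (simp add: zo_def mm_def)

lemma trv_Sp: assumes "v \<in> vecs (2*n)" shows "trv (2*n) v \<in> Sp n"
proof -
  have "om (2*n) (mat_vec (2*n) (trv (2*n) v) x) (mat_vec (2*n) (trv (2*n) v) y) = om (2*n) x y"
    if "x \<in> vecs (2*n)" "y \<in> vecs (2*n)" for x y
  proof -
    have "om (2*n) (mat_vec (2*n) (trv (2*n) v) x) (mat_vec (2*n) (trv (2*n) v) y)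
      = om (2*n) x y + om (2*n) y v * om (2*n) x v + om (2*n) x v * om (2*n) v y + om (2*n) x v * om (2*n) y v * om (2*n) v v"
      using that assms by (simp add: mat_vec_trv om_lin)
    also have "\<dots> = om (2*n) x y"
      using bit_cancel[of "om (2*n) x y" "om (2*n) y v" "om (2*n) x v"] by (simp add: om_alt om_sym[of _ v y])
    finally show ?thesis .
  qed
  then show ?thesis by (simp add: Sp_iff zo_trv)
qed

lemma mm_Sp: assumes "A \<in> Sp n" "B \<in> Sp n" shows "mm (2*n) A B \<in> Sp n"
proof -
  have "om (2*n) (mat_vec (2*n) (mm (2*n) A B) x) (mat_vec (2*n) (mm (2*n) A B) y) = om (2*n) x y"
    if "x \<in> vecs (2*n)" "y \<in> vecs (2*n)" for x y
  proof -
    have "om (2*n) (mat_vec (2*n) (mm (2*n) A B) x) (mat_vec (2*n) (mm (2*n) A B) y)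
       = om (2*n) (mat_vec (2*n) A (mat_vec (2*n) B x)) (mat_vec (2*n) A (mat_vec (2*n) B y))"
      by (simp only: mat_vec_mm)
    also have "\<dots> = om (2*n) (mat_vec (2*n) B x) (mat_vec (2*n) B y)"
      using assms(1) mat_vec_vecs unfolding Sp_iff by blast
    also have "\<dots> = om (2*n) x y"
      using assms(2) that unfolding Sp_iff by blast
    finally show ?thesis .
  qed
  then show ?thesis unfolding Sp_iff using zo_mm by blast
qed

lemma Sp_inj0:
  assumes C: "C \<in> Sp n" and x: "x \<in> vecs (2*n)" and z: "mat_vec (2*n) C x = (\<lambda>_. 0)"
  shows "x = (\<lambda>_. 0)"
proof
  fix k show "x k = 0"
  proof (cases "k < 2*n")
    case True
    have "x k = om (2*n) x (evec (2*n - 1 - k))" using om_evec[OF True, of x] by simp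
    also have "\<dots> = om (2*n) (mat_vec (2*n) C x) (mat_vec (2*n) C (evec (2*n - 1 - k)))"
    proof -
      have "evec (2*n - 1 - k) \<in> vecs (2*n)" using True by (intro evec_vecs) arith
      then show ?thesis using C x unfolding Sp_iff by (simp only:)
    qed
    also have "\<dots> = 0" using z by (simp add: om_zero1)
    finally show ?thesis .
  next
    case False then show ?thesis using x by (simp add: vecs_def)
  qed
qed

lemma Sp_inj:
  assumes C: "C \<in> Sp n" and x: "x \<in> vecs (2*n)" and y: "y \<in> vecs (2*n)"
    and e: "mat_vec (2*n) C x = mat_vec (2*n) C y"
  shows "x = y"
proof -
  have "mat_vec (2*n) C (\<lambda>i. x i + y i) = (\<lambda>_. 0)"
    unfolding mat_vec_add e by (metis bit_add_self)
  moreover have "(\<lambda>i. x i + y i) \<in> vecs (2*n)" using x y by (simp add: vecs_def)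
  ultimately have "(\<lambda>i. x i + y i) = (\<lambda>_. 0)" using Sp_inj0[OF C] by blast
  then show ?thesis unfolding fun_eq_iff by (metis bit_eq_iff_add)
qed

lemma mm_cancel:
  assumes A: "A \<in> Sp n" and B: "zo (2*n) B" and B': "zo (2*n) B'"
    and e: "mm (2*n) A B = mm (2*n) A B'"
  shows "B = B'"
proof (intro ext)
  fix i j
  show "B i j = B' i j"
  proof (cases "i < 2*n \<and> j < 2*n")
    case True
    have "mat_vec (2*n) A (mat_vec (2*n) B (evec j)) = mat_vec (2*n) A (mat_vec (2*n) B' (evec j))"
      using e by (metis mat_vec_mm)
    then have "mat_vec (2*n) B (evec j) = mat_vec (2*n) B' (evec j)"
      using Sp_inj[OF A] mat_vec_vecs by blast
    then show ?thesis using True by (simp add: mat_vec_evec fun_eq_iff) (metis True)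
  next
    case False then show ?thesis using B B' by (auto simp: zo_def)
  qed
qed

lemma nonzero_bit: "x \<in> vecs N \<Longrightarrow> x \<noteq> (\<lambda>_. 0) \<Longrightarrow> \<exists>i<N. x i = 1"
  by (auto simp: vecs_def fun_eq_iff) (metis bit_not_zero_iff not_le)

lemma exists_z:
  assumes x: "x \<in> vecs N" "x \<noteq> (\<lambda>_. 0)" and y: "y \<in> vecs N" "y \<noteq> (\<lambda>_. 0)"
  shows "\<exists>z\<in>vecs N. om N x z = 1 \<and> om N y z = 1"
proof (cases "\<exists>i<N. x i = 1 \<and> y i = 1")
  case True
  then obtain i where i: "i < N" "x i = 1" "y i = 1" by blast
  show ?thesis using i by (intro bexI[of _ "evec (N - 1 - i)"]) (auto simp: om_evec evec_vecs)
next
  case False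
  obtain i where i: "i < N" "x i = 1" using nonzero_bit[OF x] by blast
  obtain j where j: "j < N" "y j = 1" using nonzero_bit[OF y] by blast
  have yi: "y i = 0" and xj: "x j = 0" using False i j by auto
  let ?z = "\<lambda>r. evec (N - 1 - i) r + evec (N - 1 - j) r"
  have "om N x ?z = 1" using i j xj by (simp add: om_add2 om_evec)
  moreover have "om N y ?z = 1" using i j yi by (simp add: om_add2 om_evec)
  moreover have "?z \<in> vecs N" using i j by (auto simp: vecs_def evec_def)
  ultimately show ?thesis by blast
qed

lemma transitive:
  assumes x: "x \<in> vecs (2*n)" "x \<noteq> (\<lambda>_. 0)" and y: "y \<in> vecs (2*n)" "y \<noteq> (\<lambda>_. 0)"
  shows "\<exists>M\<in>Sp n. mat_vec (2*n) M x = y"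
proof -
  let ?N = "2*n"
  obtain z where z: "z \<in> vecs ?N" "om ?N x z = 1" "om ?N y z = 1" using exists_z[OF x y] by blast
  let ?v1 = "\<lambda>r. x r + z r" and ?v2 = "\<lambda>r. z r + y r"
  have v1: "?v1 \<in> vecs ?N" and v2: "?v2 \<in> vecs ?N" using x y z by (auto simp: vecs_def)
  have "om ?N x ?v1 = 1" using z by (simp add: om_add2 om_alt)
  then have s1: "mat_vec ?N (trv ?N ?v1) x = z"
    using x v1 by (simp add: mat_vec_trv add.assoc[symmetric])
  have "om ?N z ?v2 = 1" using z by (simp add: om_add2 om_alt om_sym[of _ z y])
  then have s2: "mat_vec ?N (trv ?N ?v2) z = y"
    using z v2 by (simp add: mat_vec_trv add.assoc[symmetric])
  have "mm ?N (trv ?N ?v2) (trv ?N ?v1) \<in> Sp n" using v1 v2 by (simp add: mm_Sp trv_Sp)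
  moreover have "mat_vec ?N (mm ?N (trv ?N ?v2) (trv ?N ?v1)) x = y" using s1 s2 by (simp add: mat_vec_mm)
  ultimately show ?thesis by blast
qed


lemma Sp_zo: "C \<in> Sp n \<Longrightarrow> zo (2*n) C" by (simp add: Sp_iff)

lemma finite_zo: "finite {C. zo N C}"
proof (rule inj_on_finite[where f="\<lambda>C. {(i,j). C i j = 1}" and B="Pow ({..<N} \<times> {..<N})"])
  show "inj_on (\<lambda>C. {(i, j). C i j = 1}) {C. zo N C}"
  proof (rule inj_onI)
    fix C D assume "C \<in> {C. zo N C}" "D \<in> {C. zo N C}" and e: "{(i, j). C i j = 1} = {(i, j). D i j = 1}"
    show "C = D"
    proof (intro ext)
      fix i j
      have "C i j = 1 \<longleftrightarrow> D i j = 1" using e by (auto simp: set_eq_iff)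
      then show "C i j = D i j" by (metis bit_not_one_iff)
    qed
  qed
  show "(\<lambda>C. {(i, j). C i j = 1}) ` {C. zo N C} \<subseteq> Pow ({..<N} \<times> {..<N})"
    by (auto simp: zo_def) (metis not_le zero_neq_one)+
qed auto

lemma finite_Sp: "finite (Sp n)"
  by (rule finite_subset[OF _ finite_zo[of "2*n"]]) (auto simp: Sp_zo)

definition W :: "nat \<Rightarrow> nat \<Rightarrow> (nat \<Rightarrow> bit) set" where
  "W m N = {x. (\<forall>i\<ge>N. x i = 0) \<and> (\<forall>i<m. x i = 0)}"

lemma W_bij: "bij_betw (\<lambda>x. {i. x i = 1}) (W m N) (Pow {m..<N})"
proof (rule bij_betw_byWitness[where f'="\<lambda>S i. if i \<in> S then 1 else 0"])
  show "\<forall>a\<in>W m N. (\<lambda>i. if i \<in> {i. a i = 1} then 1 else 0) = a"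
    by (auto simp: fun_eq_iff)
  show "\<forall>a'\<in>Pow {m..<N}. {i. (if i \<in> a' then 1 else 0) = (1::bit)} = a'"
    by auto
  show "(\<lambda>x. {i. x i = 1}) ` W m N \<subseteq> Pow {m..<N}"
    by (auto simp: W_def) (metis not_le zero_neq_one)+
  show "(\<lambda>S i. if i \<in> S then 1 else 0) ` Pow {m..<N} \<subseteq> W m N"
    by (auto simp: W_def)
qed

lemma card_W: "card (W m N) = 2 ^ (N - m)"
  using bij_betw_same_card[OF W_bij[of m N]] by (simp add: card_Pow)

lemma finite_W: "finite (W m N)"
  using bij_betw_finite[OF W_bij[of m N]] by simp

lemma vecs_W: "vecs N = W 0 N" by (simp add: vecs_def W_def)

lemma zero_W: "(\<lambda>_. 0) \<in> W m N" by (simp add: W_def)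

lemma card_W0: "card (W m N - {\<lambda>_. 0}) = 2 ^ (N - m) - 1"
  by (simp add: card_W zero_W finite_W)

lemma fiber_le:
  assumes w: "w \<in> vecs (2*n)"
    and x: "x \<in> vecs (2*n)" "x \<noteq> (\<lambda>_. 0)" and y: "y \<in> vecs (2*n)" "y \<noteq> (\<lambda>_. 0)"
  shows "card {C\<in>Sp n. mat_vec (2*n) C w = x} \<le> card {C\<in>Sp n. mat_vec (2*n) C w = y}"
proof -
  obtain M where M: "M \<in> Sp n" "mat_vec (2*n) M x = y" using transitive[OF x y] by blast
  show ?thesis
  proof (rule card_inj_on_le[where f="mm (2*n) M"])
    show "inj_on (mm (2*n) M) {C\<in>Sp n. mat_vec (2*n) C w = x}"
      by (rule inj_onI) (use mm_cancel[OF M(1)] Sp_zo in blast)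
    show "mm (2*n) M ` {C\<in>Sp n. mat_vec (2*n) C w = x} \<subseteq> {C\<in>Sp n. mat_vec (2*n) C w = y}"
      using M by (auto simp: mm_Sp mat_vec_mm)
    show "finite {C\<in>Sp n. mat_vec (2*n) C w = y}" using finite_Sp by simp
  qed
qed

lemma count_main:
  assumes w: "w \<in> vecs (2*n)" "w \<noteq> (\<lambda>_. 0)" and m: "m \<le> 2*n"
  shows "card {C\<in>Sp n. \<forall>i<m. mat_vec (2*n) C w i = 0} * 2^m \<le> card (Sp n)"
proof -
  let ?N = "2*n"
  define F where "F x = {C\<in>Sp n. mat_vec ?N C w = x}" for x
  define c where "c = card (F w)"
  have cF: "card (F x) = c" if "x \<in> vecs ?N" "x \<noteq> (\<lambda>_. 0)" for x
    unfolding c_def F_def using fiber_le[OF w(1) that w] fiber_le[OF w(1) w that] by simp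
  have finF: "finite (F x)" for x using finite_Sp by (simp add: F_def)
  have disj: "pairwise (\<lambda>x y. F x \<inter> F y = {}) A" for A
    by (auto simp: pairwise_def F_def)
  have nz: "mat_vec ?N C w \<noteq> (\<lambda>_. 0)" if "C \<in> Sp n" for C
    using Sp_inj0[OF that w(1)] w(2) by blast
  have "Sp n = (\<Union>x\<in>W 0 ?N - {\<lambda>_. 0}. F x)"
    using nz mat_vec_vecs by (auto simp: F_def vecs_W)
  then have "card (Sp n) = card (\<Union>x\<in>W 0 ?N - {\<lambda>_. 0}. F x)" by (rule arg_cong)
  also have "\<dots> = (\<Sum>x\<in>W 0 ?N - {\<lambda>_. 0}. card (F x))"
    by (rule card_UN_disjoint) (use finite_W finF in \<open>auto simp: F_def\<close>)
  also have "\<dots> = (2^?N - 1) * c"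
    using cF card_W0[of 0 ?N] by (simp add: vecs_W)
  finally have S: "card (Sp n) = (2^?N - 1) * c" .
  have "{C\<in>Sp n. \<forall>i<m. mat_vec ?N C w i = 0} = (\<Union>x\<in>W m ?N - {\<lambda>_. 0}. F x)"
    using nz mat_vec_vecs by (auto simp: F_def W_def vecs_def)
  then have "card {C\<in>Sp n. \<forall>i<m. mat_vec ?N C w i = 0} = card (\<Union>x\<in>W m ?N - {\<lambda>_. 0}. F x)" by (rule arg_cong)
  also have "\<dots> = (\<Sum>x\<in>W m ?N - {\<lambda>_. 0}. card (F x))"
    by (rule card_UN_disjoint) (use finite_W finF in \<open>auto simp: F_def\<close>)
  also have "\<dots> = (2^(?N - m) - 1) * c"
    using cF card_W0[of m ?N] by (simp add: W_def vecs_def)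
  finally have T: "card {C\<in>Sp n. \<forall>i<m. mat_vec ?N C w i = 0} = (2^(?N - m) - 1) * c" .
  have p: "2^(?N - m) * 2^m = (2::nat)^?N" using m by (simp flip: power_add)
  have "(2^(?N - m) - 1) * 2^m = 2^?N - (2::nat)^m" using p by (simp add: diff_mult_distrib)
  also have "\<dots> \<le> 2^?N - 1" by (simp add: diff_le_mono2)
  finally have "(2^(?N - m) - 1) * 2^m \<le> (2::nat)^?N - 1" .
  then show ?thesis unfolding S T
    by (metis mult.assoc mult.commute mult_le_mono1)
qed


lemma rank_props:
  assumes R: "is_ranking p n \<sigma>" and u: "u \<in> vecs (2*n)"
  shows "rank n \<sigma> (u, v) \<in> {1..2^(2*n)} \<and> \<sigma> v (rank n \<sigma> (u, v)) = u"
proof -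
  have b: "bij_betw (\<sigma> v) {1..2^(2*n)} (vecs (2*n))" using R by (simp add: is_ranking_def)
  then have "u \<in> \<sigma> v ` {1..2^(2*n)}" using u by (simp add: bij_betw_def)
  then obtain j where j: "j \<in> {1..2^(2*n)}" "\<sigma> v j = u" by blast
  have "rank n \<sigma> (u, v) = j"
    unfolding rank_def
    by (rule the_equality) (use j b in \<open>auto simp: bij_betw_def inj_on_def\<close>)
  then show ?thesis using j by simp
qed

lemma rank_sigma:
  assumes R: "is_ranking p n \<sigma>" and j: "j \<in> {1..2^(2*n)}"
  shows "rank n \<sigma> (\<sigma> v j, v) = j"
proof -
  have b: "bij_betw (\<sigma> v) {1..2^(2*n)} (vecs (2*n))" using R by (simp add: is_ranking_def)
  show ?thesis unfolding rank_def
    by (rule the_equality) (use j b in \<open>auto simp: bij_betw_def inj_on_def\<close>)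
qed

lemma sigma_inj:
  assumes R: "is_ranking p n \<sigma>"
  shows "inj_on (\<sigma> v) {1..2^(2*n)}" and "j \<in> {1..2^(2*n)} \<Longrightarrow> \<sigma> v j \<in> vecs (2*n)"
  using R unfolding is_ranking_def bij_betw_def by blast+

lemma sigma_mono:
  assumes R: "is_ranking p n \<sigma>" and "1 \<le> j1" "j1 \<le> j2" "j2 \<le> 2^(2*n)"
  shows "pmf p (\<sigma> v j2, v) \<le> pmf p (\<sigma> v j1, v)"
  using R assms by (auto simp: is_ranking_def)

lemma syndrome_W: "syndrome n m C u \<in> W 0 m"
  by (simp add: syndrome_def W_def)

lemma conv_bound:
  assumes R: "is_ranking p n \<sigma>" and supp: "\<forall>uv \<in> set_pmf p. fst uv \<in> vecs (2*n)"
  shows "measure_pmf.prob p {uv. rank n \<sigma> uv > 2^m} \<le> err_prob p n m C D"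
proof -
  let ?N = "2*n"
  let ?syn = "syndrome n m C"
  define A where "A = {(u, v). D v (?syn u) = u}"
  define A' where "A' = {(u, v). D v (?syn u) = u \<and> u \<in> vecs ?N}"
  define S where "S v = {j\<in>{1..2^?N}. D v (?syn (\<sigma> v j)) = \<sigma> v j}" for v
  define c where "c v r = card {j\<in>S v. j \<le> r}" for v r
  define \<phi> where "\<phi> uv = (\<sigma> (snd uv) (c (snd uv) (rank n \<sigma> uv)), snd uv)" for uv
  have finS: "finite (S v)" for v by (simp add: S_def)
  have cardS: "card (S v) \<le> 2^m" for v
  proof -
    have "card (S v) \<le> card (W 0 m)"
    proof (rule card_inj_on_le[where f="\<lambda>j. ?syn (\<sigma> v j)"])
      show "inj_on (\<lambda>j. ?syn (\<sigma> v j)) (S v)"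
      proof (rule inj_onI)
        fix j1 j2 assume j1: "j1 \<in> S v" and j2: "j2 \<in> S v" and e: "?syn (\<sigma> v j1) = ?syn (\<sigma> v j2)"
        have "\<sigma> v j1 = \<sigma> v j2" using j1 j2 e by (simp add: S_def)
        then show "j1 = j2" using sigma_inj(1)[OF R] j1 j2 by (auto simp: S_def inj_on_def)
      qed
    qed (auto simp: syndrome_W finite_W)
    then show ?thesis by (simp add: card_W)
  qed
  have c_le: "c v r \<le> r" for v r
  proof -
    have "c v r \<le> card {1..r}" unfolding c_def by (rule card_mono) (auto simp: S_def)
    then show ?thesis by simp
  qed
  have c_ge: "1 \<le> c v r" if "r \<in> S v" for v r
  proof -
    have "r \<in> {j\<in>S v. j \<le> r}" using that by simp
    then have "{j\<in>S v. j \<le> r} \<noteq> {}" by blast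
    then show ?thesis unfolding c_def using finS
      by (metis (no_types, lifting) One_nat_def Suc_leI card_gt_0_iff finite_subset mem_Collect_eq subsetI)
  qed
  have c_S: "c v r \<le> 2^m" for v r
    using card_mono[OF finS, of "{j\<in>S v. j \<le> r}" v] cardS[of v] by (auto simp: c_def)
  have c_mono: "c v r1 < c v r2" if "r1 \<in> S v" "r2 \<in> S v" "r1 < r2" for v r1 r2
    unfolding c_def
  proof (rule psubset_card_mono)
    show "finite {j \<in> S v. j \<le> r2}" using finS by simp
    have "r2 \<in> {j \<in> S v. j \<le> r2}" "r2 \<notin> {j \<in> S v. j \<le> r1}" using that by auto
    moreover have "{j \<in> S v. j \<le> r1} \<subseteq> {j \<in> S v. j \<le> r2}" using that by auto
    ultimately show "{j \<in> S v. j \<le> r1} \<subset> {j \<in> S v. j \<le> r2}" by blast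
  qed
  have c_inj: "r1 = r2" if "r1 \<in> S v" "r2 \<in> S v" "c v r1 = c v r2" for v r1 r2
    using c_mono[of r1 v r2] c_mono[of r2 v r1] that by (metis less_irrefl nat_neq_iff)
  have inA': "rank n \<sigma> (u, v) \<in> S v" "rank n \<sigma> (u, v) \<in> {1..2^?N}" "\<sigma> v (rank n \<sigma> (u, v)) = u"
    if "(u, v) \<in> A'" for u v
    using that rank_props[OF R, of u v] by (auto simp: A'_def S_def)
  have inj: "inj_on \<phi> A'"
  proof (rule inj_onI)
    fix x y assume x: "x \<in> A'" and y: "y \<in> A'" and e: "\<phi> x = \<phi> y"
    obtain u v where xx: "x = (u, v)" by (cases x) auto
    obtain u' v' where yy: "y = (u', v')" by (cases y) auto
    have vv: "v' = v" using e by (simp add: \<phi>_def xx yy)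
    let ?r = "rank n \<sigma> (u, v)" and ?r' = "rank n \<sigma> (u', v)"
    have x': "(u, v) \<in> A'" using x xx by simp
    have y': "(u', v) \<in> A'" using y yy vv by simp
    note r = inA'[OF x'] and r' = inA'[OF y']
    have "\<sigma> v (c v ?r) = \<sigma> v (c v ?r')" using e by (simp add: \<phi>_def xx yy vv)
    moreover have "c v ?r \<in> {1..2^?N}" using c_ge[OF r(1)] c_le[of v ?r] r(2) by auto
    moreover have "c v ?r' \<in> {1..2^?N}" using c_ge[OF r'(1)] c_le[of v ?r'] r'(2) by auto
    ultimately have "c v ?r = c v ?r'" by (rule inj_onD[OF sigma_inj(1)[OF R]])
    then have "?r = ?r'" by (rule c_inj[OF r(1) r'(1)])
    then have "u = u'" using r(3) r'(3) by metis
    then show "x = y" using xx yy vv by simp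
  qed
  have pmf_le: "pmf p x \<le> pmf p (\<phi> x)" if "x \<in> A'" for x
  proof -
    obtain u v where xx: "x = (u, v)" by (cases x) auto
    let ?r = "rank n \<sigma> (u, v)"
    have x': "(u, v) \<in> A'" using that xx by simp
    note r = inA'[OF x']
    have "pmf p (\<sigma> v ?r, v) \<le> pmf p (\<sigma> v (c v ?r), v)"
      by (rule sigma_mono[OF R]) (use c_ge[OF r(1)] c_le[of v ?r] r(2) in auto)
    then show ?thesis using r(3) by (simp add: xx \<phi>_def)
  qed
  have img: "\<phi> ` A' \<subseteq> {uv. rank n \<sigma> uv \<le> 2^m}"
  proof
    fix y assume "y \<in> \<phi> ` A'"
    then obtain u v where uv: "(u, v) \<in> A'" and yy: "y = \<phi> (u, v)" by force
    let ?r = "rank n \<sigma> (u, v)"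
    note r = inA'[OF uv]
    have cin: "c v ?r \<in> {1..2^?N}" using c_ge[OF r(1)] c_le[of v ?r] r(2) by auto
    have "rank n \<sigma> y = c v ?r" using rank_sigma[OF R cin] by (simp add: yy \<phi>_def)
    then show "y \<in> {uv. rank n \<sigma> uv \<le> 2^m}" using c_S by simp
  qed
  have "measure_pmf.prob p A = measure_pmf.prob p (A \<inter> set_pmf p)" by (simp add: measure_Int_set_pmf)
  also have "\<dots> \<le> measure_pmf.prob p A'"
    by (rule measure_pmf.finite_measure_mono) (use supp in \<open>auto simp: A_def A'_def\<close>)
  also have "\<dots> = infsetsum (pmf p) A'" by (simp add: measure_pmf_conv_infsetsum)
  also have "\<dots> \<le> infsetsum (\<lambda>x. pmf p (\<phi> x)) A'"
  proof (rule infsetsum_mono)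
    show "Infinite_Set_Sum.abs_summable_on (\<lambda>x. pmf p (\<phi> x)) A'"
      using abs_summable_on_reindex_iff[OF inj, of "pmf p"] pmf_abs_summable by (simp add: comp_def)
  qed (use pmf_le in auto)
  also have "\<dots> = infsetsum (pmf p) (\<phi> ` A')" by (rule infsetsum_reindex[OF inj, symmetric])
  also have "\<dots> \<le> infsetsum (pmf p) {uv. rank n \<sigma> uv \<le> 2^m}"
    by (rule infsetsum_mono_neutral_left) (use img in auto)
  also have "\<dots> = measure_pmf.prob p {uv. rank n \<sigma> uv \<le> 2^m}" by (simp add: measure_pmf_conv_infsetsum)
  finally have PA: "measure_pmf.prob p A \<le> measure_pmf.prob p {uv. rank n \<sigma> uv \<le> 2^m}" .
  have e1: "err_prob p n m C D = 1 - measure_pmf.prob p A"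
  proof -
    have "{(u, v). D v (?syn u) \<noteq> u} = space (measure_pmf p) - A" by (auto simp: A_def)
    moreover have "measure_pmf.prob p (space (measure_pmf p) - A) = 1 - measure_pmf.prob p A"
      by (rule measure_pmf.prob_compl) simp
    ultimately show ?thesis unfolding err_prob_def by metis
  qed
  have e2: "measure_pmf.prob p {uv. rank n \<sigma> uv > 2^m} = 1 - measure_pmf.prob p {uv. rank n \<sigma> uv \<le> 2^m}"
  proof -
    have "{uv. rank n \<sigma> uv > 2^m} = space (measure_pmf p) - {uv. rank n \<sigma> uv \<le> 2^m}" by auto
    moreover have "measure_pmf.prob p (space (measure_pmf p) - {uv. rank n \<sigma> uv \<le> 2^m}) = 1 - measure_pmf.prob p {uv. rank n \<sigma> uv \<le> 2^m}"
      by (rule measure_pmf.prob_compl) simp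
    ultimately show ?thesis by metis
  qed
  show ?thesis using PA e1 e2 by simp
qed


lemma syn_eq_imp:
  assumes "syndrome n m C a = syndrome n m C b"
  shows "\<forall>i<m. mat_vec (2*n) C (\<lambda>i. a i + b i) i = 0"
proof (intro allI impI)
  fix i assume i: "i < m"
  have "mat_vec (2*n) C a i = mat_vec (2*n) C b i"
    using fun_cong[OF assms, of i] i by (simp add: syndrome_def)
  then show "mat_vec (2*n) C (\<lambda>i. a i + b i) i = 0" by (simp add: mat_vec_add)
qed

definition Dd :: "nat \<Rightarrow> nat \<Rightarrow> ('v \<Rightarrow> nat \<Rightarrow> (nat \<Rightarrow> bit)) \<Rightarrow> (nat \<Rightarrow> nat \<Rightarrow> bit) \<Rightarrow> 'v \<Rightarrow> (nat \<Rightarrow> bit) \<Rightarrow> (nat \<Rightarrow> bit)" where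
  "Dd n m \<sigma> C v s = \<sigma> v (LEAST j. 1 \<le> j \<and> j \<le> 2^(2*n) \<and> syndrome n m C (\<sigma> v j) = s)"

lemma pointwise_card:
  assumes R: "is_ranking p n \<sigma>" and u: "u \<in> vecs (2*n)" and m: "m \<le> 2*n"
    and r: "rank n \<sigma> (u, v) \<le> 2^m"
  shows "real (card {C\<in>Sp n. Dd n m \<sigma> C v (syndrome n m C u) \<noteq> u}) * 2^m
           \<le> real (card (Sp n)) * (real (rank n \<sigma> (u, v)) - 1)"
proof -
  let ?N = "2*n"
  define r0 where "r0 = rank n \<sigma> (u, v)"
  let ?r = r0
  have rr: "?r \<in> {1..2^?N}" "\<sigma> v ?r = u" using rank_props[OF R u] by (auto simp: r0_def)
  have r: "r0 \<le> 2^m" using r unfolding r0_def .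
  define Y where "Y j = {C\<in>Sp n. \<forall>i<m. mat_vec ?N C (\<lambda>i. \<sigma> v j i + u i) i = 0}" for j
  have sub: "{C\<in>Sp n. Dd n m \<sigma> C v (syndrome n m C u) \<noteq> u} \<subseteq> (\<Union>j\<in>{1..<?r}. Y j)"
  proof
    fix C assume C: "C \<in> {C\<in>Sp n. Dd n m \<sigma> C v (syndrome n m C u) \<noteq> u}"
    define P where "P j = (1 \<le> j \<and> j \<le> 2^?N \<and> syndrome n m C (\<sigma> v j) = syndrome n m C u)" for j
    have Pr: "P ?r" using rr by (simp add: P_def)
    define j0 where "j0 = (LEAST j. P j)"
    have Pj0: "P j0" unfolding j0_def by (rule LeastI[of P, OF Pr])
    have j0le: "j0 \<le> ?r" unfolding j0_def by (rule Least_le[of P, OF Pr])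
    have "Dd n m \<sigma> C v (syndrome n m C u) = \<sigma> v j0"
      by (simp add: Dd_def j0_def P_def)
    then have "j0 \<noteq> ?r" using C rr by auto
    then have j0in: "j0 \<in> {1..<?r}" using Pj0 j0le by (auto simp: P_def)
    have "C \<in> Y j0" using C syn_eq_imp[of n m C "\<sigma> v j0" u] Pj0 by (auto simp: Y_def P_def)
    then show "C \<in> (\<Union>j\<in>{1..<?r}. Y j)" using j0in by blast
  qed
  have cY: "card (Y j) * 2^m \<le> card (Sp n)" if j: "j \<in> {1..<?r}" for j
  proof -
    have jN: "j \<in> {1..2^?N}" using j rr by auto
    have sv: "\<sigma> v j \<in> vecs ?N" using sigma_inj(2)[OF R jN] .
    have "\<sigma> v j \<noteq> \<sigma> v ?r" using inj_onD[OF sigma_inj(1)[OF R, of v] _ jN rr(1)] j by auto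
    then have ne: "\<sigma> v j \<noteq> u" using rr(2) by simp
    have nz: "(\<lambda>i. \<sigma> v j i + u i) \<noteq> (\<lambda>_. 0)"
    proof
      assume z: "(\<lambda>i. \<sigma> v j i + u i) = (\<lambda>_. 0)"
      have "\<sigma> v j i = u i" for i using fun_cong[OF z, of i] by (metis bit_eq_iff_add)
      then have "\<sigma> v j = u" by blast
      then show False using ne by contradiction
    qed
    have vv: "(\<lambda>i. \<sigma> v j i + u i) \<in> vecs ?N" using sv u by (simp add: vecs_def)
    show ?thesis unfolding Y_def by (rule count_main[OF vv nz m])
  qed
  have finY: "finite (Y j)" for j using finite_Sp by (simp add: Y_def)
  have "card {C\<in>Sp n. Dd n m \<sigma> C v (syndrome n m C u) \<noteq> u} \<le> card (\<Union>j\<in>{1..<?r}. Y j)"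
    by (rule card_mono[OF _ sub]) (simp add: finY)
  also have "\<dots> \<le> (\<Sum>j\<in>{1..<?r}. card (Y j))" by (rule card_UN_le) simp
  finally have "card {C\<in>Sp n. Dd n m \<sigma> C v (syndrome n m C u) \<noteq> u} * 2^m \<le> (\<Sum>j\<in>{1..<?r}. card (Y j)) * 2^m"
    by simp
  also have "\<dots> = (\<Sum>j\<in>{1..<?r}. card (Y j) * 2^m)" by (simp add: sum_distrib_right)
  also have "\<dots> \<le> (\<Sum>j\<in>{1..<?r}. card (Sp n))" by (rule sum_mono) (use cY in auto)
  also have "\<dots> = (?r - 1) * card (Sp n)" by simp
  finally have "real (card {C\<in>Sp n. Dd n m \<sigma> C v (syndrome n m C u) \<noteq> u} * 2^m) \<le> real ((?r - 1) * card (Sp n))"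
    by (simp only: of_nat_le_iff)
  then show ?thesis using rr(1) unfolding r0_def[symmetric] by (simp add: of_nat_diff mult.commute)
qed


lemma Sp_nonempty: "trv (2*n) (\<lambda>_. 0) \<in> Sp n"
  by (rule trv_Sp) (simp add: vecs_def)

lemma ach_bound:
  assumes R: "is_ranking p n \<sigma>" and supp: "\<forall>uv \<in> set_pmf p. fst uv \<in> vecs (2*n)" and m: "m \<le> 2*n"
  shows "\<exists>C\<in>Sp n. err_prob p n m C (Dd n m \<sigma> C) \<le>
     measure_pmf.prob p {uv. rank n \<sigma> uv > 2^m} +
     measure_pmf.expectation p (\<lambda>uv. (if rank n \<sigma> uv \<le> 2^m then 1 else 0) * (real (rank n \<sigma> uv) - 1) / 2^m)"
proof -
  define B where "B C = {(u, v). Dd n m \<sigma> C v (syndrome n m C u) \<noteq> u}" for C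
  define h where "h uv = (if rank n \<sigma> uv \<le> 2^m then 1 else 0) * (real (rank n \<sigma> uv) - 1) / 2^m" for uv
  define I where "I = {uv. rank n \<sigma> uv > 2^m}"
  define g where "g uv = indicator I uv + h uv" for uv
  have hb: "norm (h x) \<le> 1" for x
  proof (cases "rank n \<sigma> x \<le> 2^m")
    case True
    then have a: "real (rank n \<sigma> x) \<le> 2^m" by (metis of_nat_le_iff of_nat_numeral of_nat_power)
    have "(real (rank n \<sigma> x) - 1) / 2^m \<le> 1" by (simp add: field_simps) (use a in linarith)
    moreover have "-1 \<le> (real (rank n \<sigma> x) - 1) / 2^m"
    proof -
      have "- (2^m) \<le> real (rank n \<sigma> x) - 1" using one_le_power[of "2::real" m] of_nat_0_le_iff[of "rank n \<sigma> x"] by linarith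
      then show ?thesis by (simp add: field_simps)
    qed
    moreover have "h x = (real (rank n \<sigma> x) - 1) / 2^m" using True by (simp add: h_def)
    ultimately show ?thesis unfolding real_norm_def abs_le_iff by linarith
  next
    case False then show ?thesis by (simp add: h_def)
  qed
  have ih: "integrable (measure_pmf p) h"
    by (rule measure_pmf.integrable_const_bound[where B=1]) (use hb in auto)
  have iI: "integrable (measure_pmf p) (indicator A :: _ \<Rightarrow> real)" for A
    by (rule measure_pmf.integrable_const_bound[where B=1]) (auto simp: indicator_def)
  have ig: "integrable (measure_pmf p) g" unfolding g_def using ih iI by simp
  have Eg: "measure_pmf.expectation p g = measure_pmf.prob p I + measure_pmf.expectation p h"
    unfolding g_def using ih iI by simp
  have errI: "err_prob p n m C (Dd n m \<sigma> C) = measure_pmf.expectation p (indicator (B C))" for C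
    by (simp add: err_prob_def B_def)
  have pw: "(\<Sum>C\<in>Sp n. indicator (B C) x) \<le> real (card (Sp n)) * g x" if x: "x \<in> set_pmf p" for x
  proof -
    obtain u v where xx: "x = (u, v)" by (cases x) auto
    have u: "u \<in> vecs (2*n)" using supp x xx by auto
    have "(\<Sum>C\<in>Sp n. indicator (B C) x) = (\<Sum>C\<in>Sp n. indicator {C. Dd n m \<sigma> C v (syndrome n m C u) \<noteq> u} C)"
      by (rule sum.cong) (auto simp: indicator_def B_def xx)
    also have "\<dots> = (\<Sum>C\<in>Sp n. of_bool (Dd n m \<sigma> C v (syndrome n m C u) \<noteq> u))"
      by (rule sum.cong) (auto simp: indicator_def)
    also have "\<dots> = real (card (Sp n \<inter> {C. Dd n m \<sigma> C v (syndrome n m C u) \<noteq> u}))"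
      using finite_Sp[of n] by simp
    also have "Sp n \<inter> {C. Dd n m \<sigma> C v (syndrome n m C u) \<noteq> u} = {C\<in>Sp n. Dd n m \<sigma> C v (syndrome n m C u) \<noteq> u}"
      by auto
    finally have S: "(\<Sum>C\<in>Sp n. indicator (B C) x) = real (card {C\<in>Sp n. Dd n m \<sigma> C v (syndrome n m C u) \<noteq> u})" .
    show ?thesis
    proof (cases "rank n \<sigma> (u, v) \<le> 2^m")
      case True
      have gx: "g x = (real (rank n \<sigma> (u, v)) - 1) / 2^m" using True by (simp add: g_def h_def I_def xx)
      have "real (card {C\<in>Sp n. Dd n m \<sigma> C v (syndrome n m C u) \<noteq> u}) * 2^m
           \<le> real (card (Sp n)) * (real (rank n \<sigma> (u, v)) - 1)"
        by (rule pointwise_card[OF R u m True])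
      then show ?thesis unfolding S gx by (simp add: field_simps)
    next
      case False
      have gx: "g x = 1" using False by (simp add: g_def h_def I_def xx)
      have "card {C\<in>Sp n. Dd n m \<sigma> C v (syndrome n m C u) \<noteq> u} \<le> card (Sp n)"
        by (rule card_mono[OF finite_Sp]) auto
      then show ?thesis unfolding S gx by simp
    qed
  qed
  have "(\<Sum>C\<in>Sp n. err_prob p n m C (Dd n m \<sigma> C)) = measure_pmf.expectation p (\<lambda>x. \<Sum>C\<in>Sp n. indicator (B C) x)"
    unfolding errI by (rule Bochner_Integration.integral_sum[where f="\<lambda>C. indicator (B C)" and I="Sp n", symmetric]) (rule iI)
  also have "\<dots> \<le> measure_pmf.expectation p (\<lambda>x. real (card (Sp n)) * g x)"
    by (rule integral_mono_AE) (use iI ig pw in \<open>auto intro!: AE_pmfI\<close>)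
  also have "\<dots> = real (card (Sp n)) * measure_pmf.expectation p g" by simp
  finally have sum_le: "(\<Sum>C\<in>Sp n. err_prob p n m C (Dd n m \<sigma> C)) \<le> real (card (Sp n)) * measure_pmf.expectation p g" .
  have "\<exists>C\<in>Sp n. err_prob p n m C (Dd n m \<sigma> C) \<le> measure_pmf.expectation p g"
  proof (rule ccontr)
    assume "\<not> ?thesis"
    then have lt: "\<And>C. C \<in> Sp n \<Longrightarrow> measure_pmf.expectation p g < err_prob p n m C (Dd n m \<sigma> C)" by auto
    have "(\<Sum>C\<in>Sp n. measure_pmf.expectation p g) < (\<Sum>C\<in>Sp n. err_prob p n m C (Dd n m \<sigma> C))"
      by (rule sum_strict_mono[OF finite_Sp]) (use Sp_nonempty lt in auto)
    then show False using sum_le by simp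
  qed
  then show ?thesis unfolding Eg I_def h_def .
qed


lemma eps_conv_mono:
  assumes "k' \<le> k" "k \<le> n"
  shows "eps_conv p n \<sigma> k' \<le> eps_conv p n \<sigma> k"
proof -
  have pw: "(2::nat)^(n - k) \<le> 2^(n - k')" using assms by (intro power_increasing) auto
  have "{uv. rank n \<sigma> uv > 2^(n - k')} \<subseteq> {uv. rank n \<sigma> uv > 2^(n - k)}"
    using le_less_trans[OF pw] by blast
  then show ?thesis unfolding eps_conv_def
    by (rule measure_pmf.finite_measure_mono) simp
qed

theorem theorem7:
  fixes p :: "((nat \<Rightarrow> bit) \<times> 'v) pmf" and n :: nat and \<sigma> :: "'v \<Rightarrow> nat \<Rightarrow> (nat \<Rightarrow> bit)"
    and \<epsilon> :: real
  assumes "1 \<le> n"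
    and "\<forall>uv \<in> set_pmf p. fst uv \<in> vecs (2*n)"
    and "is_ranking p n \<sigma>"
    and "0 < \<epsilon>"
  shows "(\<forall>k\<le>n. eps_conv p n \<sigma> k \<le> eps_guess p n k \<and> eps_guess p n k \<le> eps_ach p n \<sigma> k)
       \<and> R_ach p n \<sigma> \<epsilon> \<le> R_guess p n \<epsilon> \<and> R_guess p n \<epsilon> < R_conv p n \<sigma> \<epsilon>"
proof -
  note n1 = assms(1) and supp = assms(2) and R = assms(3)
  have conv: "eps_conv p n \<sigma> k \<le> err_prob p n (n - k) C D" for k C D
    unfolding eps_conv_def by (rule conv_bound[OF R supp])
  have ach: "\<exists>C\<in>Sp n. \<exists>D. err_prob p n (n - k) C D \<le> eps_ach p n \<sigma> k" for k
  proof -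
    have "n - k \<le> 2*n" by simp
    from ach_bound[OF R supp this] show ?thesis unfolding eps_ach_def by blast
  qed
  have part1: "eps_conv p n \<sigma> k \<le> eps_guess p n k \<and> eps_guess p n k \<le> eps_ach p n \<sigma> k" for k
  proof
    let ?X = "{err_prob p n (n - k) C D | C D. C \<in> Sp n}"
    have ne: "?X \<noteq> {}" using Sp_nonempty by blast
    show "eps_conv p n \<sigma> k \<le> eps_guess p n k"
      unfolding eps_guess_def by (rule cInf_greatest[OF ne]) (use conv in blast)
    have bdd: "bdd_below ?X"
      by (rule bdd_belowI[where m=0]) (auto simp: err_prob_def)
    obtain C D where CD: "C \<in> Sp n" "err_prob p n (n - k) C D \<le> eps_ach p n \<sigma> k" using ach by blast
    have "eps_guess p n k \<le> err_prob p n (n - k) C D"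
      unfolding eps_guess_def by (rule cInf_lower[OF _ bdd]) (use CD in blast)
    then show "eps_guess p n k \<le> eps_ach p n \<sigma> k" using CD by linarith
  qed
  have part2: "R_ach p n \<sigma> \<epsilon> \<le> R_guess p n \<epsilon>"
    unfolding R_ach_def R_guess_def
  proof (rule Sup_subset_mono, rule subsetI)
    fix x assume "x \<in> {ereal (real k / real n) | k. k \<le> n \<and> eps_ach p n \<sigma> k \<le> \<epsilon>}"
    then obtain k where k: "x = ereal (real k / real n)" "k \<le> n" "eps_ach p n \<sigma> k \<le> \<epsilon>" by blast
    obtain C D where CD: "C \<in> Sp n" "err_prob p n (n - k) C D \<le> eps_ach p n \<sigma> k" using ach by blast
    show "x \<in> {ereal (real k / real n) | k. k \<le> n \<and> (\<exists>C D. C \<in> Sp n \<and> err_prob p n (n - k) C D \<le> \<epsilon>)}"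
    proof -
      have "err_prob p n (n - k) C D \<le> \<epsilon>" using CD k by linarith
      then show ?thesis using k CD(1) by blast
    qed
  qed
  define Gs where "Gs = {k. k \<le> n \<and> (\<exists>C D. C \<in> Sp n \<and> err_prob p n (n - k) C D \<le> \<epsilon>)}"
  define Qs where "Qs = {k. k \<le> n \<and> eps_conv p n \<sigma> k > \<epsilon>}"
  have GQ: "k < k'" if kG: "k \<in> Gs" and kQ: "k' \<in> Qs" for k k'
  proof (rule ccontr)
    assume "\<not> k < k'"
    then have "k' \<le> k" by simp
    obtain C D where "C \<in> Sp n" "err_prob p n (n - k) C D \<le> \<epsilon>" using kG unfolding Gs_def by blast
    then have "eps_conv p n \<sigma> k \<le> \<epsilon>" using conv[of k C D] by linarith
    moreover have "eps_conv p n \<sigma> k' \<le> eps_conv p n \<sigma> k"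
      using eps_conv_mono[OF \<open>k' \<le> k\<close>] kG by (auto simp: Gs_def)
    ultimately show False using kQ by (auto simp: Qs_def)
  qed
  have RG: "R_guess p n \<epsilon> = Sup ((\<lambda>k. ereal (real k / real n)) ` Gs)"
    unfolding R_guess_def Gs_def by (rule arg_cong[where f=Sup]) auto
  have RC: "R_conv p n \<sigma> \<epsilon> = Inf ((\<lambda>k. ereal (real k / real n)) ` Qs)"
    unfolding R_conv_def Qs_def by (rule arg_cong[where f=Inf]) auto
  have finG: "finite Gs" by (simp add: Gs_def)
  have finQ: "finite Qs" by (simp add: Qs_def)
  have part3: "R_guess p n \<epsilon> < R_conv p n \<sigma> \<epsilon>"
  proof (cases "Gs = {}")
    case True
    have "0 \<le> Inf ((\<lambda>k. ereal (real k / real n)) ` Qs)"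
      by (rule Inf_greatest) auto
    then show ?thesis unfolding RG RC True by (simp add: bot_ereal_def)
  next
    case False
    define k0 where "k0 = Max Gs"
    have k0: "k0 \<in> Gs" using Max_in[OF finG False] by (simp add: k0_def)
    have le0: "Sup ((\<lambda>k. ereal (real k / real n)) ` Gs) \<le> ereal (real k0 / real n)"
    proof (rule Sup_least)
      fix x assume "x \<in> (\<lambda>k. ereal (real k / real n)) ` Gs"
      then obtain k where k: "k \<in> Gs" "x = ereal (real k / real n)" by blast
      have "k \<le> k0" using Max_ge[OF finG k(1)] by (simp add: k0_def)
      then show "x \<le> ereal (real k0 / real n)" using k(2) by (simp add: divide_right_mono)
    qed
    have gt0: "ereal (real k0 / real n) < Inf ((\<lambda>k. ereal (real k / real n)) ` Qs)"
    proof (cases "Qs = {}")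
      case True then show ?thesis by (simp add: top_ereal_def)
    next
      case False
      define k1 where "k1 = Min Qs"
      have k1: "k1 \<in> Qs" using Min_in[OF finQ False] by (simp add: k1_def)
      have "ereal (real k1 / real n) \<le> Inf ((\<lambda>k. ereal (real k / real n)) ` Qs)"
      proof (rule Inf_greatest)
        fix x assume "x \<in> (\<lambda>k. ereal (real k / real n)) ` Qs"
        then obtain k where k: "k \<in> Qs" "x = ereal (real k / real n)" by blast
        have "k1 \<le> k" using Min_le[OF finQ k(1)] by (simp add: k1_def)
        then show "ereal (real k1 / real n) \<le> x" using k(2) by (simp add: divide_right_mono)
      qed
      moreover have "real k0 / real n < real k1 / real n"
        using GQ[OF k0 k1] n1 by (simp add: divide_strict_right_mono)
      moreover have "ereal (real k0 / real n) < ereal (real k1 / real n)"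
        using calculation(2) by simp
      ultimately show ?thesis using less_le_trans by blast
    qed
    show ?thesis unfolding RG RC using le0 gt0 by (rule le_less_trans)
  qed
  show ?thesis using part1 part2 part3 by blast
qed

end
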